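(* Let $q\in\mathbb C$ with $|q|=1$, $q^2\neq1$, and let $A,B$ be self-adjoint operators on a Hilbert space $\mathcal H$. Fix $a,b\in\mathbb R$ with $ab\neq0$, and choose a square root $q^{1/2}$ of $q$, setting $\bar q^{1/2}:=\overline{q^{1/2}}$. Define the operator $T$ with domain $\mathcal D(T):=\mathcal D_q(A,B)$ by $$Tf=\bar q^{1/2}(A-aq^{1/2}I)(B-bq^{1/2}I)f+\tfrac{\bar q^{1/2}-q^{1/2}}{2}\,ab\,f .$$ If $T$ is essentially self-adjoint, then with $\lambda=a\bar q^{1/2}$ and $\mu=b\bar q^{1/2}$ (so that $\lambda,\lambda q\in\rho(A)$, $\mu,\mu q\in\rho(B)$) both identities $$R_\lambda(A)R_\mu(B)=qR_{\mu q}(B)R_{\lambda q}(A)+\mu\lambda q(q-1)R_{\mu q}(B)R_{\lambda q}(A)R_\lambda(A)R_\mu(B),$$ $$R_\lambda(A)R_\mu(B)=qR_{\mu q}(B)R_{\lambda q}(A)+\mu\lambda q(q-1)R_\lambda(A)R_\mu(B)R_{\mu q}(B)R_{\lambda q}(A)$$ hold on all of $\mathcal H$, and the bounded operator $R_{bq^{1/2}}(B)R_{aq^{1/2}}(A)$ is normal.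
   Context: $\rho(T)$ denotes the resolvent set and $R_\lambda(T)=(T-\lambda I)^{-1}$ the resolvent of a closed operator; products of unbounded operators have their natural domains; $\mathcal D_q(A,B):=\{f\in\mathcal D(BA)\cap\mathcal D(AB): ABf=qBAf\}$. (The operator $T$ is symmetric.) *)

theory Defs
  imports "HOL-Analysis.Analysis"
begin

text \<open>The distribution has no complex inner product spaces, so we introduce the class of
complex Hilbert spaces: a complete real normed space carrying a complex scalar multiplication
compatible with the real one, and a complex inner product (conjugate-linear in the first,
linear in the second argument) inducing the norm.\<close>

class chilbert_space = real_normed_vector + complete_space +
  fixes scaleC :: "complex \<Rightarrow> 'a \<Rightarrow> 'a" (infixr "*\<^sub>C" 75)
    and cinner :: "'a \<Rightarrow> 'a \<Rightarrow> complex"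
  assumes scaleC_add_right: "c *\<^sub>C (x + y) = c *\<^sub>C x + c *\<^sub>C y"
    and scaleC_add_left: "(c + d) *\<^sub>C x = c *\<^sub>C x + d *\<^sub>C x"
    and scaleC_scaleC: "c *\<^sub>C (d *\<^sub>C x) = (c * d) *\<^sub>C x"
    and scaleC_one: "1 *\<^sub>C x = x"
    and scaleR_scaleC: "scaleR r x = complex_of_real r *\<^sub>C x"
    and cinner_commute: "cinner x y = cnj (cinner y x)"
    and cinner_add_right: "cinner x (y + z) = cinner x y + cinner x z"
    and cinner_scaleC_right: "cinner x (c *\<^sub>C y) = c * cinner x y"
    and norm_eq_sqrt_cinner: "norm x = sqrt (Re (cinner x x))"

text \<open>An operator is a pair (domain, action); the action outside the domain is irrelevant.\<close>

type_synonym 'a lop = "'a set \<times> ('a \<Rightarrow> 'a)"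

definition dom :: "'a lop \<Rightarrow> 'a set" where "dom T = fst T"
definition app :: "'a lop \<Rightarrow> 'a \<Rightarrow> 'a" where "app T = snd T"

definition csubspace :: "'a::chilbert_space set \<Rightarrow> bool" where
  "csubspace D \<longleftrightarrow> 0 \<in> D \<and> (\<forall>x\<in>D. \<forall>y\<in>D. x + y \<in> D) \<and> (\<forall>c. \<forall>x\<in>D. c *\<^sub>C x \<in> D)"

definition linear_op :: "'a::chilbert_space lop \<Rightarrow> bool" where
  "linear_op T \<longleftrightarrow> csubspace (dom T) \<and>
     (\<forall>x\<in>dom T. \<forall>y\<in>dom T. app T (x + y) = app T x + app T y) \<and>
     (\<forall>c. \<forall>x\<in>dom T. app T (c *\<^sub>C x) = c *\<^sub>C app T x)"

definition densely_defined :: "'a::chilbert_space lop \<Rightarrow> bool" where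
  "densely_defined T \<longleftrightarrow> closure (dom T) = UNIV"

definition lop_eq :: "'a lop \<Rightarrow> 'a lop \<Rightarrow> bool" where
  "lop_eq S T \<longleftrightarrow> dom S = dom T \<and> (\<forall>x\<in>dom S. app S x = app T x)"

definition lop_comp :: "'a lop \<Rightarrow> 'a lop \<Rightarrow> 'a lop" where
  "lop_comp S T = ({x \<in> dom T. app T x \<in> dom S}, \<lambda>x. app S (app T x))"

definition lop_shift :: "'a::chilbert_space lop \<Rightarrow> complex \<Rightarrow> 'a lop" where
  "lop_shift T c = (dom T, \<lambda>x. app T x - c *\<^sub>C x)"

definition adjoint :: "'a::chilbert_space lop \<Rightarrow> 'a lop" where
  "adjoint T = ({y. \<exists>z. \<forall>x\<in>dom T. cinner (app T x) y = cinner x z},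
                \<lambda>y. SOME z. \<forall>x\<in>dom T. cinner (app T x) y = cinner x z)"

definition self_adjoint :: "'a::chilbert_space lop \<Rightarrow> bool" where
  "self_adjoint T \<longleftrightarrow> linear_op T \<and> densely_defined T \<and> lop_eq (adjoint T) T"

definition graph :: "'a lop \<Rightarrow> ('a \<times> 'a) set" where
  "graph T = {(x, app T x) | x. x \<in> dom T}"

definition ess_self_adjoint :: "'a::chilbert_space lop \<Rightarrow> bool" where
  "ess_self_adjoint T \<longleftrightarrow> linear_op T \<and> densely_defined T \<and>
     (\<exists>S. graph S = closure (graph T) \<and> self_adjoint S)"

definition resolvent_set :: "'a::chilbert_space lop \<Rightarrow> complex set" where
  "resolvent_set T = {l. (\<forall>y. \<exists>!x. x \<in> dom T \<and> app T x - l *\<^sub>C x = y) \<and>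
      (\<exists>C. \<forall>x\<in>dom T. norm x \<le> C * norm (app T x - l *\<^sub>C x))}"

definition resolvent :: "'a::chilbert_space lop \<Rightarrow> complex \<Rightarrow> 'a \<Rightarrow> 'a" where
  "resolvent T l = (\<lambda>y. THE x. x \<in> dom T \<and> app T x - l *\<^sub>C x = y)"

definition badjoint :: "('a::chilbert_space \<Rightarrow> 'a) \<Rightarrow> 'a \<Rightarrow> 'a" where
  "badjoint N = (\<lambda>y. THE z. \<forall>x. cinner (N x) y = cinner x z)"

definition normal_op :: "('a::chilbert_space \<Rightarrow> 'a) \<Rightarrow> bool" where
  "normal_op N \<longleftrightarrow> N \<circ> badjoint N = badjoint N \<circ> N"

definition Dq :: "'a::chilbert_space lop \<Rightarrow> 'a lop \<Rightarrow> complex \<Rightarrow> 'a set" where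
  "Dq A B q = {f. f \<in> dom (lop_comp B A) \<and> f \<in> dom (lop_comp A B) \<and>
                  app (lop_comp A B) f = q *\<^sub>C app (lop_comp B A) f}"

text \<open>Here r is the chosen square root q^{1/2} of q, and cnj r plays the role of
 conj(q)^{1/2}.\<close>
definition Top :: "'a::chilbert_space lop \<Rightarrow> 'a lop \<Rightarrow> complex \<Rightarrow> complex \<Rightarrow> real \<Rightarrow> real \<Rightarrow> 'a lop" where
  "Top A B q r a b = (Dq A B q, \<lambda>f.
      cnj r *\<^sub>C app (lop_comp (lop_shift A (of_real a * r)) (lop_shift B (of_real b * r))) f
      + ((cnj r - r) / 2 * of_real a * of_real b) *\<^sub>C f)"

end

theory Submission
  imports Defs
begin


lemma scaleC_zero_left[simp]: "0 *\<^sub>C (x::'a::chilbert_space) = 0"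
  using scaleR_scaleC[of 0 x] by simp

lemma scaleC_zero_right[simp]: "c *\<^sub>C (0::'a::chilbert_space) = 0"
  using scaleC_add_right[of c "0::'a" 0] by simp

lemma scaleC_minus_left: "(- c) *\<^sub>C (x::'a::chilbert_space) = - (c *\<^sub>C x)"
  using scaleC_add_left[of c "-c" x] by (simp add: eq_neg_iff_add_eq_0 add.commute)

lemma scaleC_minus_right: "c *\<^sub>C (- x::'a::chilbert_space) = - (c *\<^sub>C x)"
  using scaleC_add_right[of c x "-x"] by (simp add: eq_neg_iff_add_eq_0 add.commute)

lemma scaleC_diff_left: "(c - d) *\<^sub>C (x::'a::chilbert_space) = c *\<^sub>C x - d *\<^sub>C x"
  using scaleC_add_left[of c "-d" x] by (simp add: scaleC_minus_left)

lemma scaleC_diff_right: "c *\<^sub>C (x - y::'a::chilbert_space) = c *\<^sub>C x - c *\<^sub>C y"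
  using scaleC_add_right[of c x "-y"] by (simp add: scaleC_minus_right)

lemma scaleC_neg1: "(-1) *\<^sub>C (x::'a::chilbert_space) = - x"
  by (simp add: scaleC_minus_left scaleC_one)

lemma cinner_add_left: "cinner (x + y) (z::'a::chilbert_space) = cinner x z + cinner y z"
  by (subst (1 2 3) cinner_commute) (simp add: cinner_add_right)

lemma cinner_scaleC_left: "cinner (c *\<^sub>C x) (y::'a::chilbert_space) = cnj c * cinner x y"
  by (subst (1 2) cinner_commute) (simp add: cinner_scaleC_right)

lemma cinner_zero_right[simp]: "cinner x (0::'a::chilbert_space) = 0"
  using cinner_scaleC_right[of x 0 0] by simp

lemma cinner_zero_left[simp]: "cinner (0::'a::chilbert_space) x = 0"
  using cinner_scaleC_left[of 0 0 x] by simp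

lemma cinner_minus_right: "cinner x (- y::'a::chilbert_space) = - cinner x y"
  using cinner_scaleC_right[of x "-1" y] by (simp add: scaleC_neg1)

lemma cinner_minus_left: "cinner (- x) (y::'a::chilbert_space) = - cinner x y"
  using cinner_scaleC_left[of "-1" x y] by (simp add: scaleC_neg1)

lemma cinner_diff_right: "cinner x (y - z::'a::chilbert_space) = cinner x y - cinner x z"
  using cinner_add_right[of x y "-z"] by (simp add: cinner_minus_right)

lemma cinner_diff_left: "cinner (x - y) (z::'a::chilbert_space) = cinner x z - cinner y z"
  using cinner_add_left[of x "-y" z] by (simp add: cinner_minus_left)

lemma cinner_scaleR_right: "cinner x (r *\<^sub>R y::'a::chilbert_space) = of_real r * cinner x y"
  by (simp add: scaleR_scaleC cinner_scaleC_right)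

lemma cinner_scaleR_left: "cinner (r *\<^sub>R x) (y::'a::chilbert_space) = of_real r * cinner x y"
  by (simp add: scaleR_scaleC cinner_scaleC_left)

lemma Im_cinner_self: "Im (cinner x (x::'a::chilbert_space)) = 0"
  using cinner_commute[of x x] by (simp add: complex_eq_iff)

lemma Re_cinner_self: "Re (cinner x (x::'a::chilbert_space)) = (norm x)^2"
proof -
  have "Re (cinner x x) \<ge> 0"
  proof (rule ccontr)
    assume "\<not> Re (cinner x x) \<ge> 0"
    hence "sqrt (Re (cinner x x)) < 0" by simp
    thus False using norm_eq_sqrt_cinner[of x] norm_ge_zero[of x] by linarith
  qed
  thus ?thesis by (simp add: norm_eq_sqrt_cinner)
qed

lemma cinner_self: "cinner x (x::'a::chilbert_space) = of_real ((norm x)^2)"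
  by (simp add: complex_eq_iff Re_cinner_self Im_cinner_self)

lemma cinner_self_eq_0: "cinner x (x::'a::chilbert_space) = 0 \<longleftrightarrow> x = 0"
  unfolding cinner_self by simp

lemma norm_scaleC: "norm (c *\<^sub>C (x::'a::chilbert_space)) = cmod c * norm x"
proof -
  have "(norm (c *\<^sub>C x))^2 = Re (cnj c * c * cinner x x)"
    by (simp only: Re_cinner_self[symmetric] cinner_scaleC_left cinner_scaleC_right mult.assoc mult.left_commute[of c "cnj c"])
  also have "cnj c * c = of_real ((cmod c)^2)" using complex_norm_square[of c] by (simp add: mult.commute)
  hence "cnj c * c * cinner x x = of_real ((cmod c * norm x)^2)"
    by (simp add: cinner_self power_mult_distrib)
  hence "Re (cnj c * c * cinner x x) = (cmod c * norm x)^2" by simp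
  finally show ?thesis by (simp add: power2_eq_iff_nonneg)
qed

lemma norm_add_sq: "(norm (x + y::'a::chilbert_space))^2 = (norm x)^2 + (norm y)^2 + 2 * Re (cinner x y)"
proof -
  have "(norm (x + y))^2 = Re (cinner x x + cinner x y + cinner y x + cinner y y)"
    by (simp add: Re_cinner_self[symmetric] cinner_add_left cinner_add_right)
  also have "\<dots> = (norm x)^2 + (norm y)^2 + 2 * Re (cinner x y)"
    using cinner_commute[of y x] by (simp add: Re_cinner_self)
  finally show ?thesis .
qed

lemma norm_diff_sq: "(norm (x - y::'a::chilbert_space))^2 = (norm x)^2 + (norm y)^2 - 2 * Re (cinner x y)"
  using norm_add_sq[of x "-y"] by (simp add: cinner_minus_right)

lemma Re_cinner_le: "Re (cinner x (y::'a::chilbert_space)) \<le> norm x * norm y"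
proof -
  have "norm (x + y) \<le> norm x + norm y" by (rule norm_triangle_ineq)
  hence "(norm (x + y))^2 \<le> (norm x + norm y)^2"
    by (simp add: power_mono)
  thus ?thesis by (simp add: norm_add_sq power2_sum)
qed

lemma cauchy_schwarz: "cmod (cinner x (y::'a::chilbert_space)) \<le> norm x * norm y"
proof (cases "cinner x y = 0")
  case True thus ?thesis by simp
next
  case False
  define d where "d = cnj (cinner x y) / of_real (cmod (cinner x y))"
  have cd: "cmod d = 1" using False by (simp add: d_def norm_divide)
  have "cinner x y * cnj (cinner x y) = of_real (cmod (cinner x y))^2"
    using complex_norm_square[of "cinner x y"] by simp
  hence "d * cinner x y = of_real (cmod (cinner x y))"
    using False by (simp add: d_def power2_eq_square mult.commute)
  hence "cmod (cinner x y) = Re (cinner x (d *\<^sub>C y))"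
    by (simp add: cinner_scaleC_right)
  also have "\<dots> \<le> norm x * norm (d *\<^sub>C y)" by (rule Re_cinner_le)
  also have "\<dots> = norm x * norm y" by (simp add: norm_scaleC cd)
  finally show ?thesis .
qed

lemma bl_scaleC: "bounded_linear (\<lambda>x::'a::chilbert_space. c *\<^sub>C x)"
proof (rule bounded_linear_intro[where K="cmod c"])
  show "c *\<^sub>C (x + y) = c *\<^sub>C x + c *\<^sub>C y" for x y :: 'a by (rule scaleC_add_right)
  show "c *\<^sub>C (r *\<^sub>R x) = r *\<^sub>R (c *\<^sub>C x)" for r and x :: 'a
    by (simp add: scaleR_scaleC scaleC_scaleC mult.commute)
  show "norm (c *\<^sub>C x) \<le> norm x * cmod c" for x :: 'a by (simp add: norm_scaleC mult.commute)
qed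

lemma bl_cinner_right: "bounded_linear (\<lambda>x::'a::chilbert_space. cinner u x)"
proof (rule bounded_linear_intro[where K="norm u"])
  show "cinner u (x + y) = cinner u x + cinner u y" for x y :: 'a by (rule cinner_add_right)
  show "cinner u (r *\<^sub>R x) = r *\<^sub>R (cinner u x)" for r and x :: 'a
    by (simp add: cinner_scaleR_right scaleR_conv_of_real)
  show "norm (cinner u x) \<le> norm x * norm u" for x :: 'a using cauchy_schwarz[of u x] by (simp add: mult.commute)
qed

lemma bl_cinner_left: "bounded_linear (\<lambda>x::'a::chilbert_space. cinner x u)"
proof (rule bounded_linear_intro[where K="norm u"])
  show "cinner (x + y) u = cinner x u + cinner y u" for x y :: 'a by (rule cinner_add_left)
  show "cinner (r *\<^sub>R x) u = r *\<^sub>R (cinner x u)" for r and x :: 'a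
    by (simp add: cinner_scaleR_left scaleR_conv_of_real)
  show "norm (cinner x u) \<le> norm x * norm u" for x :: 'a using cauchy_schwarz[of x u] by simp
qed

lemma tendsto_scaleC[tendsto_intros]: "(f \<longlongrightarrow> x) F \<Longrightarrow> ((\<lambda>n. c *\<^sub>C f n) \<longlongrightarrow> c *\<^sub>C (x::'a::chilbert_space)) F"
  using bounded_linear.tendsto[OF bl_scaleC] .

lemma tendsto_cinner_right: "(f \<longlongrightarrow> x) F \<Longrightarrow> ((\<lambda>n. cinner u (f n)) \<longlongrightarrow> cinner u (x::'a::chilbert_space)) F"
  using bounded_linear.tendsto[OF bl_cinner_right] .

lemma tendsto_cinner_left: "(f \<longlongrightarrow> x) F \<Longrightarrow> ((\<lambda>n. cinner (f n) u) \<longlongrightarrow> cinner (x::'a::chilbert_space) u) F"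
  using bounded_linear.tendsto[OF bl_cinner_left] .

lemma Re_orth:
  fixes v w :: "'a::chilbert_space"
  assumes "\<And>t::real. (norm v)^2 \<le> (norm (v - t *\<^sub>R w))^2"
  shows "Re (cinner v w) = 0"
proof (cases "w = 0")
  case True thus ?thesis by simp
next
  case False
  define R where "R = Re (cinner v w)"
  define W where "W = (norm w)^2"
  have W: "W > 0" using False by (simp add: W_def)
  define t where "t = R / W"
  have "(norm (v - t *\<^sub>R w))^2 = (norm v)^2 + t^2 * (norm w)^2 - 2 * t * R"
    by (simp add: norm_diff_sq cinner_scaleR_right R_def power_mult_distrib)
  also have "t^2 * (norm w)^2 = t*t*W" by (simp add: W_def power2_eq_square)
  finally have "(norm v)^2 \<le> (norm v)^2 + t*t*W - 2 * t * R" using assms[of t] by simp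
  moreover have "t * W = R" using W by (simp add: t_def)
  hence "t*t*W = t*R" by (metis mult.assoc)
  ultimately have "t * R \<le> 0" by linarith
  hence "R * R / W \<le> 0" by (simp add: t_def)
  hence "R * R \<le> 0" using W by (simp add: divide_le_0_iff)
  thus ?thesis unfolding R_def[symmetric] by (auto simp: mult_le_0_iff)
qed

lemma proj_full:
  fixes M :: "'a::chilbert_space set"
  assumes cl: "closed M" and sub: "csubspace M"
    and orth: "\<And>v. (\<forall>m\<in>M. cinner m v = 0) \<Longrightarrow> v = 0"
  shows "y \<in> M"
proof -
  have M0: "0 \<in> M" and Madd: "\<And>u v. u\<in>M \<Longrightarrow> v\<in>M \<Longrightarrow> u+v\<in>M"
    and Msc: "\<And>c u. u\<in>M \<Longrightarrow> c *\<^sub>C u \<in> M" using sub unfolding csubspace_def by auto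
  have MsR: "\<And>r u. u\<in>M \<Longrightarrow> r *\<^sub>R u \<in> M" by (simp add: scaleR_scaleC Msc)
  have Mne: "M \<noteq> {}" using M0 by auto
  define d where "d = infdist y M"
  have d0: "d \<ge> 0" by (simp add: d_def infdist_nonneg)
  have d_le: "\<And>m. m\<in>M \<Longrightarrow> d \<le> norm (y - m)" using infdist_le[of _ M y] by (simp add: d_def dist_norm)
  have "\<forall>n. \<exists>x\<in>M. norm (y - x) < d + inverse (real (Suc n))"
  proof
    fix n
    show "\<exists>x\<in>M. norm (y - x) < d + inverse (real (Suc n))"
    proof (rule ccontr)
      assume "\<not> ?thesis"
      hence "\<And>x. x\<in>M \<Longrightarrow> d + inverse (real (Suc n)) \<le> dist y x" by (auto simp: dist_norm not_less)
      hence "d + inverse (real (Suc n)) \<le> d" unfolding d_def infdist_notempty[OF Mne]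
        by (rule cINF_greatest[OF Mne])
      thus False by simp
    qed
  qed
  then obtain m where mM: "\<And>n. m n \<in> M" and mlt: "\<And>n. norm (y - m n) < d + inverse (real (Suc n))"
    by metis
  have par: "(norm (m n - m k))^2 \<le> 2*(d + inverse (real (Suc n)))^2 + 2*(d + inverse (real (Suc k)))^2 - 4*d^2" for n k
  proof -
    let ?a = "y - m n" and ?b = "y - m k"
    have pl: "(norm (?a + ?b))^2 + (norm (?a - ?b))^2 = 2*(norm ?a)^2 + 2*(norm ?b)^2"
      using norm_add_sq[of ?a ?b] norm_diff_sq[of ?a ?b] by simp
    have e1: "?a - ?b = m k - m n" by simp
    have e2: "?a + ?b = 2 *\<^sub>R (y - (1/2) *\<^sub>R (m n + m k))" by (simp add: algebra_simps scaleR_2)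
    have mid: "(1/2) *\<^sub>R (m n + m k) \<in> M" using mM by (simp add: MsR Madd)
    have h2: "2 * d \<le> norm (?a + ?b)" unfolding e2 using d_le[OF mid] by simp
    have "(2*d)^2 \<le> (norm (?a + ?b))^2" by (rule power_mono[OF h2]) (simp add: d0)
    moreover have "(norm ?a)^2 \<le> (d + inverse (real (Suc n)))^2"
      using mlt[of n] by (simp add: power_mono less_imp_le)
    moreover have "(norm ?b)^2 \<le> (d + inverse (real (Suc k)))^2"
      using mlt[of k] by (simp add: power_mono less_imp_le)
    moreover have "norm (m n - m k) = norm (?a - ?b)" by (simp add: norm_minus_commute)
    ultimately show ?thesis using pl by (simp add: power_mult_distrib)
  qed
  have "Cauchy m"
  proof (rule CauchyI)
    fix e :: real assume e: "e > 0"
    have "e^2 / (8*d+4) > 0" using e d0 by simp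
    then obtain N where N: "inverse (real (Suc N)) < e^2 / (8*d+4)" using reals_Archimedean by blast
    show "\<exists>M. \<forall>n\<ge>M. \<forall>k\<ge>M. norm (m n - m k) < e"
    proof (intro exI allI impI)
      fix n k assume n: "n \<ge> N" and k: "k \<ge> N"
      define \<delta> where "\<delta> = inverse (real (Suc N))"
      have dpos: "\<delta> > 0" by (auto simp: \<delta>_def)
      have d1: "\<delta> \<le> 1" unfolding \<delta>_def by (simp add: inverse_le_1_iff)
      have "inverse (real (Suc n)) \<le> \<delta>" "inverse (real (Suc k)) \<le> \<delta>"
        using n k by (auto simp: \<delta>_def intro!: le_imp_inverse_le)
      hence "(d + inverse (real (Suc n)))^2 \<le> (d + \<delta>)^2" "(d + inverse (real (Suc k)))^2 \<le> (d + \<delta>)^2"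
        using d0 by (auto intro!: power_mono)
      hence "(norm (m n - m k))^2 \<le> 4*(d+\<delta>)^2 - 4*d^2" using par[of n k] by simp
      also have "\<dots> = (8*d + 4*\<delta>) * \<delta>" by (simp add: power2_eq_square algebra_simps)
      also have "\<dots> \<le> (8*d+4) * \<delta>" using d1 dpos by (intro mult_right_mono) auto
      also have "\<dots> < (8*d+4) * (e^2 / (8*d+4))" using N d0 by (intro mult_strict_left_mono) (auto simp: \<delta>_def)
      also have "\<dots> = e^2" using d0 by simp
      finally show "norm (m n - m k) < e" using e by (simp add: power_less_imp_less_base)
    qed
  qed
  then obtain m0 where m0: "m \<longlonglongrightarrow> m0" using Cauchy_convergent_iff convergent_def by blast
  have m0M: "m0 \<in> M" using cl mM m0 closed_sequential_limits by blast
  have "norm (y - m0) \<le> d"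
  proof (rule LIMSEQ_le)
    show "(\<lambda>n. norm (y - m n)) \<longlonglongrightarrow> norm (y - m0)" by (intro tendsto_intros m0)
    show "(\<lambda>n. d + inverse (real (Suc n))) \<longlonglongrightarrow> d"
      using tendsto_add[OF tendsto_const LIMSEQ_inverse_real_of_nat] by simp
    show "\<exists>N. \<forall>n\<ge>N. norm (y - m n) \<le> d + inverse (real (Suc n))" using mlt less_imp_le by blast
  qed
  define v where "v = y - m0"
  have vmin: "\<And>u. u \<in> M \<Longrightarrow> norm v \<le> norm (v - u)"
  proof -
    fix u assume "u \<in> M"
    hence "m0 + u \<in> M" using m0M Madd by blast
    hence "d \<le> norm (y - (m0 + u))" by (rule d_le)
    thus "norm v \<le> norm (v - u)" using \<open>norm (y - m0) \<le> d\<close> by (simp add: v_def algebra_simps)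
  qed
  have vre: "Re (cinner v w) = 0" if "w \<in> M" for w
  proof (rule Re_orth)
    fix t :: real
    have "norm v \<le> norm (v - t *\<^sub>R w)" using vmin MsR[OF that] by blast
    thus "(norm v)^2 \<le> (norm (v - t *\<^sub>R w))^2" by (simp add: power_mono)
  qed
  have "\<forall>w\<in>M. cinner w v = 0"
  proof
    fix w assume w: "w \<in> M"
    have "Re (cinner v ((\<i>) *\<^sub>C w)) = 0" using vre Msc[OF w] by blast
    hence "Im (cinner v w) = 0" by (simp add: cinner_scaleC_right)
    moreover have "Re (cinner v w) = 0" using vre[OF w] .
    ultimately have "cinner v w = 0" by (simp add: complex_eq_iff)
    thus "cinner w v = 0" by (subst cinner_commute) simp
  qed
  hence "v = 0" by (rule orth)
  thus "y \<in> M" using m0M by (simp add: v_def)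
qed



lemma lin_dom:
  assumes "linear_op T" "x \<in> dom T" "y \<in> dom T"
  shows "x + y \<in> dom T" "c *\<^sub>C x \<in> dom T" "x - y \<in> dom T" "0 \<in> dom T"
proof -
  have s: "csubspace (dom T)" using assms(1) by (simp add: linear_op_def)
  show "x + y \<in> dom T" "c *\<^sub>C x \<in> dom T" "0 \<in> dom T" using s assms by (auto simp: csubspace_def)
  have "(-1) *\<^sub>C y \<in> dom T" using s assms by (auto simp: csubspace_def)
  hence "x + (-1) *\<^sub>C y \<in> dom T" using s assms by (auto simp: csubspace_def)
  thus "x - y \<in> dom T" by (simp add: scaleC_neg1)
qed

lemma lin_app:
  assumes "linear_op T" "x \<in> dom T" "y \<in> dom T"
  shows "app T (x + y) = app T x + app T y" "app T (c *\<^sub>C x) = c *\<^sub>C app T x"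
    "app T (x - y) = app T x - app T y"
proof -
  show "app T (x + y) = app T x + app T y" "app T (c *\<^sub>C x) = c *\<^sub>C app T x"
    using assms by (auto simp: linear_op_def)
  have "(-1) *\<^sub>C y \<in> dom T" using lin_dom(2)[OF assms(1) assms(3) assms(3)] by blast
  hence "app T (x + (-1) *\<^sub>C y) = app T x + (-1) *\<^sub>C app T y" using assms by (auto simp: linear_op_def)
  thus "app T (x - y) = app T x - app T y" by (simp add: scaleC_neg1)
qed

lemma sa_sym:
  assumes "self_adjoint S" "x \<in> dom S" "y \<in> dom S"
  shows "cinner (app S x) y = cinner x (app S y)"
proof -
  have eq: "lop_eq (adjoint S) S" using assms(1) by (simp add: self_adjoint_def)
  hence "y \<in> dom (adjoint S)" using assms(3) by (simp add: lop_eq_def)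
  hence ex: "\<exists>z. \<forall>x\<in>dom S. cinner (app S x) y = cinner x z" by (simp add: adjoint_def dom_def)
  have "app (adjoint S) y = app S y" using eq assms(3) by (simp add: lop_eq_def)
  hence "(SOME z. \<forall>x\<in>dom S. cinner (app S x) y = cinner x z) = app S y"
    by (simp add: adjoint_def app_def)
  with someI_ex[OF ex] show ?thesis using assms(2) by auto
qed

lemma dense_zero:
  assumes "densely_defined S" "\<And>x. x\<in>dom S \<Longrightarrow> cinner x v = 0"
  shows "v = 0"
proof -
  have "v \<in> closure (dom S)" using assms(1) by (simp add: densely_defined_def)
  then obtain x where x: "\<And>n. x n \<in> dom S" "x \<longlonglongrightarrow> v" using closure_sequential by blast
  have "(\<lambda>n. cinner (x n) v) \<longlonglongrightarrow> cinner v v" by (rule tendsto_cinner_left[OF x(2)])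
  moreover have "(\<lambda>n. cinner (x n) v) = (\<lambda>n. 0)" using assms(2) x(1) by auto
  ultimately have "(\<lambda>n. 0) \<longlonglongrightarrow> cinner v v" by simp
  hence "cinner v v = 0" by (simp add: LIMSEQ_const_iff)
  thus ?thesis by (simp add: cinner_self_eq_0)
qed

lemma sa_adj:
  assumes sa: "self_adjoint S" and h: "\<And>x. x\<in>dom S \<Longrightarrow> cinner (app S x) y = cinner x w"
  shows "y \<in> dom S" "app S y = w"
proof -
  have eq: "lop_eq (adjoint S) S" using sa by (simp add: self_adjoint_def)
  have "y \<in> dom (adjoint S)" using h by (auto simp: adjoint_def dom_def)
  thus yd: "y \<in> dom S" using eq by (simp add: lop_eq_def)
  have "app S y - w = 0"
  proof (rule dense_zero)
    show "densely_defined S" using sa by (simp add: self_adjoint_def)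
    fix x assume x: "x \<in> dom S"
    show "cinner x (app S y - w) = 0"
      using sa_sym[OF sa x yd] h[OF x] by (simp add: cinner_diff_right)
  qed
  thus "app S y = w" by simp
qed

lemma sa_bound:
  assumes sa: "self_adjoint S" and x: "x \<in> dom S"
  shows "\<bar>Im z\<bar> * norm x \<le> norm (app S x - z *\<^sub>C x)"
proof -
  define w where "w = app S x - z *\<^sub>C x"
  have "cinner x (app S x) = cnj (cinner x (app S x))"
    using sa_sym[OF sa x x] cinner_commute[of "app S x" x] by simp
  hence im0: "Im (cinner x (app S x)) = 0" by (simp add: complex_eq_iff)
  have "cinner x w = cinner x (app S x) - z * of_real ((norm x)^2)"
    by (simp add: w_def cinner_diff_right cinner_scaleC_right cinner_self)
  hence "Im (cinner x w) = - Im z * (norm x)^2" using im0 by simp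
  hence "\<bar>Im z\<bar> * (norm x)^2 \<le> cmod (cinner x w)"
    using abs_Im_le_cmod[of "cinner x w"] by (simp add: abs_mult)
  also have "\<dots> \<le> norm x * norm w" by (rule cauchy_schwarz)
  finally have "\<bar>Im z\<bar> * norm x * norm x \<le> norm w * norm x" by (simp add: power2_eq_square mult.commute mult.left_commute)
  thus ?thesis unfolding w_def[symmetric]
    by (cases "norm x = 0") (auto simp: mult_le_cancel_right)
qed

lemma sa_inj:
  assumes sa: "self_adjoint S" and z: "Im z \<noteq> 0"
    and x1: "x1 \<in> dom S" and x2: "x2 \<in> dom S"
    and e: "app S x1 - z *\<^sub>C x1 = app S x2 - z *\<^sub>C x2"
  shows "x1 = x2"
proof -
  have lin: "linear_op S" using sa by (simp add: self_adjoint_def)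
  have "app S (x1 - x2) - z *\<^sub>C (x1 - x2) = (app S x1 - z *\<^sub>C x1) - (app S x2 - z *\<^sub>C x2)"
    using lin_app(3)[OF lin x1 x2] by (simp add: scaleC_diff_right algebra_simps)
  also have "\<dots> = 0" using e by simp
  finally have "app S (x1 - x2) - z *\<^sub>C (x1 - x2) = 0" .
  hence "\<bar>Im z\<bar> * norm (x1 - x2) \<le> 0" using sa_bound[OF sa lin_dom(3)[OF lin x1 x2], of z] by simp
  thus ?thesis using z by (simp add: mult_le_0_iff)
qed

lemma sa_surj:
  assumes sa: "self_adjoint S" and z: "Im z \<noteq> 0"
  shows "\<exists>x\<in>dom S. app S x - z *\<^sub>C x = y"
proof -
  have lin: "linear_op S" using sa by (simp add: self_adjoint_def)
  define M where "M = {app S x - z *\<^sub>C x | x. x \<in> dom S}"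
  have "y \<in> M"
  proof (rule proj_full)
    show "csubspace M" unfolding csubspace_def
    proof (intro conjI ballI allI)
      have "0 \<in> dom S" using lin by (simp add: linear_op_def csubspace_def)
      moreover have "app S 0 = 0"
        using lin_app(2)[OF lin \<open>0 \<in> dom S\<close> \<open>0 \<in> dom S\<close>, of 0] by simp
      ultimately show "0 \<in> M" unfolding M_def by (auto intro!: exI[of _ 0])
    next
      fix u v assume "u \<in> M" "v \<in> M"
      then obtain x1 x2 where x: "x1 \<in> dom S" "x2 \<in> dom S" "u = app S x1 - z *\<^sub>C x1" "v = app S x2 - z *\<^sub>C x2"
        unfolding M_def by blast
      have "u + v = app S (x1 + x2) - z *\<^sub>C (x1 + x2)"
        using x lin_app[OF lin x(1) x(2)] by (simp add: scaleC_add_right)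
      thus "u + v \<in> M" unfolding M_def using lin_dom[OF lin x(1) x(2)] by blast
    next
      fix c u assume "u \<in> M"
      then obtain x1 where x: "x1 \<in> dom S" "u = app S x1 - z *\<^sub>C x1" unfolding M_def by blast
      have "c *\<^sub>C u = app S (c *\<^sub>C x1) - z *\<^sub>C (c *\<^sub>C x1)"
        using x lin_app[OF lin x(1) x(1)] by (simp add: scaleC_diff_right scaleC_scaleC mult.commute)
      thus "c *\<^sub>C u \<in> M" unfolding M_def using lin_dom[OF lin x(1) x(1)] by blast
    qed
  next
    show "closed M" unfolding closed_sequential_limits
    proof (intro allI impI, elim conjE)
      fix yn l assume yn: "\<forall>n. yn n \<in> M" and lim: "yn \<longlonglongrightarrow> l"
      have "\<forall>n. \<exists>xx. xx \<in> dom S \<and> yn n = app S xx - z *\<^sub>C xx" using yn unfolding M_def by blast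
      hence "\<exists>x. \<forall>n. x n \<in> dom S \<and> yn n = app S (x n) - z *\<^sub>C x n" by (rule choice)
      then obtain x where x: "\<And>n. x n \<in> dom S" "\<And>n. yn n = app S (x n) - z *\<^sub>C x n" by blast
      have Cy: "Cauchy yn" using lim by (rule LIMSEQ_imp_Cauchy)
      have bd: "norm (x n - x k) \<le> norm (yn n - yn k) / \<bar>Im z\<bar>" for n k
      proof -
        have "\<bar>Im z\<bar> * norm (x n - x k) \<le> norm (app S (x n - x k) - z *\<^sub>C (x n - x k))"
          by (rule sa_bound[OF sa lin_dom(3)[OF lin x(1) x(1)]])
        also have "app S (x n - x k) - z *\<^sub>C (x n - x k) = yn n - yn k"
          using x lin_app(3)[OF lin x(1) x(1)] by (simp add: scaleC_diff_right)
        finally show ?thesis using z by (simp add: field_simps)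
      qed
      have "Cauchy x"
      proof (rule CauchyI)
        fix e :: real assume e: "e > 0"
        then obtain N where N: "\<forall>m\<ge>N. \<forall>n\<ge>N. norm (yn m - yn n) < e * \<bar>Im z\<bar>"
          using CauchyD[OF Cy, of "e * \<bar>Im z\<bar>"] z by auto
        show "\<exists>M. \<forall>m\<ge>M. \<forall>n\<ge>M. norm (x m - x n) < e"
        proof (intro exI allI impI)
          fix m n assume "m \<ge> N" "n \<ge> N"
          hence "norm (yn m - yn n) / \<bar>Im z\<bar> < e" using N z by (simp add: divide_less_eq)
          thus "norm (x m - x n) < e" using bd[of m n] by linarith
        qed
      qed
      then obtain x0 where x0: "x \<longlonglongrightarrow> x0" using Cauchy_convergent_iff convergent_def by blast
      have Sx: "(\<lambda>n. app S (x n)) \<longlonglongrightarrow> l + z *\<^sub>C x0"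
      proof -
        have "(\<lambda>n. yn n + z *\<^sub>C x n) \<longlonglongrightarrow> l + z *\<^sub>C x0" by (intro tendsto_intros lim x0)
        moreover have "(\<lambda>n. yn n + z *\<^sub>C x n) = (\<lambda>n. app S (x n))" using x(2) by auto
        ultimately show ?thesis by simp
      qed
      have h: "cinner (app S u) x0 = cinner u (l + z *\<^sub>C x0)" if u: "u \<in> dom S" for u
      proof -
        have "(\<lambda>n. cinner (app S u) (x n)) \<longlonglongrightarrow> cinner (app S u) x0" by (rule tendsto_cinner_right[OF x0])
        moreover have "(\<lambda>n. cinner u (app S (x n))) \<longlonglongrightarrow> cinner u (l + z *\<^sub>C x0)" by (rule tendsto_cinner_right[OF Sx])
        moreover have "(\<lambda>n. cinner (app S u) (x n)) = (\<lambda>n. cinner u (app S (x n)))"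
          using sa_sym[OF sa u x(1)] by auto
        ultimately have "(\<lambda>n. cinner u (app S (x n))) \<longlonglongrightarrow> cinner (app S u) x0" by simp
        from LIMSEQ_unique[OF this \<open>(\<lambda>n. cinner u (app S (x n))) \<longlonglongrightarrow> cinner u (l + z *\<^sub>C x0)\<close>]
        show ?thesis .
      qed
      have "x0 \<in> dom S" "app S x0 = l + z *\<^sub>C x0" using sa_adj[OF sa h] by auto
      thus "l \<in> M" unfolding M_def by force
    qed
  next
    fix v assume h: "\<forall>m\<in>M. cinner m v = 0"
    have h2: "cinner (app S x) v = cinner x (cnj z *\<^sub>C v)" if x: "x \<in> dom S" for x
    proof -
      have "cinner (app S x - z *\<^sub>C x) v = 0" using h x unfolding M_def by blast
      thus ?thesis by (simp add: cinner_diff_left cinner_scaleC_left cinner_scaleC_right)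
    qed
    have vd: "v \<in> dom S" and Sv: "app S v = cnj z *\<^sub>C v" using sa_adj[OF sa h2] by auto
    have "\<bar>Im (cnj z)\<bar> * norm v \<le> norm (app S v - cnj z *\<^sub>C v)" by (rule sa_bound[OF sa vd])
    thus "v = 0" using Sv z by (simp add: mult_le_0_iff)
  qed
  thus ?thesis unfolding M_def by blast
qed



definition lc :: "'a::chilbert_space \<Rightarrow> 'a \<Rightarrow> 'a \<Rightarrow> 'a \<Rightarrow> complex \<Rightarrow> complex \<Rightarrow> complex \<Rightarrow> complex \<Rightarrow> 'a" where
  "lc Y P Q f c1 c2 c3 c4 = c1 *\<^sub>C Y + c2 *\<^sub>C P + c3 *\<^sub>C Q + c4 *\<^sub>C f"

lemma lc_add: "lc Y P Q f a1 a2 a3 a4 + lc Y P Q f b1 b2 b3 b4 = lc Y P Q f (a1+b1) (a2+b2) (a3+b3) (a4+b4)"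
  by (simp add: lc_def scaleC_add_left algebra_simps)
lemma lc_diff: "lc Y P Q f a1 a2 a3 a4 - lc Y P Q f b1 b2 b3 b4 = lc Y P Q f (a1-b1) (a2-b2) (a3-b3) (a4-b4)"
  by (simp add: lc_def scaleC_diff_left algebra_simps)
lemma lc_scale: "c *\<^sub>C lc Y P Q f a1 a2 a3 a4 = lc Y P Q f (c*a1) (c*a2) (c*a3) (c*a4)"
  by (simp add: lc_def scaleC_add_right scaleC_scaleC)
lemma lc_cong: "a1 = b1 \<Longrightarrow> a2 = b2 \<Longrightarrow> a3 = b3 \<Longrightarrow> a4 = b4 \<Longrightarrow> lc Y P Q f a1 a2 a3 a4 = lc Y P Q f b1 b2 b3 b4"
  by simp

lemmas lc_rules = lc_add lc_diff lc_scale

lemma E1g: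
  fixes Y P Q f :: "'a::chilbert_space"
  assumes h: "cnj r * r = 1" and e: "Y' = lc Y P Q f 1 0 0 0" "P' = lc Y P Q f 0 1 0 0" "Q' = lc Y P Q f 0 0 1 0" "f' = lc Y P Q f 0 0 0 1"
  shows "cnj r *\<^sub>C ((r^2 *\<^sub>C Y' - (b*r) *\<^sub>C P') - (a*r) *\<^sub>C (Q' - (b*r) *\<^sub>C f'))
       + ((cnj r - r) / 2 * a * b) *\<^sub>C f' - (- ((cnj r - r) / 2 * a * b)) *\<^sub>C f'
     = r *\<^sub>C ((Y' - (a * cnj r) *\<^sub>C Q') - (b * cnj r) *\<^sub>C (P' - (a * cnj r) *\<^sub>C f'))"
proof -
  have r0: "r \<noteq> 0" using h by auto
  have cr: "cnj r = inverse r" using h r0 by (simp add: field_simps)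
  show ?thesis unfolding e lc_rules
    by (rule lc_cong) (simp_all add: cr field_simps power2_eq_square)
qed

lemma res_ex1:
  assumes sa: "self_adjoint S" and z: "Im z \<noteq> 0"
  shows "\<exists>!x. x \<in> dom S \<and> app S x - z *\<^sub>C x = y"
  using sa_surj[OF sa z, of y] sa_inj[OF sa z] by blast

lemma res_set:
  assumes sa: "self_adjoint S" and z: "Im z \<noteq> 0"
  shows "z \<in> resolvent_set S"
proof -
  have "\<forall>x\<in>dom S. norm x \<le> inverse \<bar>Im z\<bar> * norm (app S x - z *\<^sub>C x)"
  proof
    fix x assume x: "x \<in> dom S"
    have "\<bar>Im z\<bar> * norm x \<le> norm (app S x - z *\<^sub>C x)" by (rule sa_bound[OF sa x])
    thus "norm x \<le> inverse \<bar>Im z\<bar> * norm (app S x - z *\<^sub>C x)" using z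
      by (simp add: field_simps)
  qed
  thus ?thesis unfolding resolvent_set_def using res_ex1[OF sa z] by blast
qed

lemma res_prop:
  assumes sa: "self_adjoint S" and z: "Im z \<noteq> 0"
  shows "resolvent S z y \<in> dom S" "app S (resolvent S z y) - z *\<^sub>C resolvent S z y = y"
  using theI'[OF res_ex1[OF sa z, of y]] unfolding resolvent_def by auto

lemma res_inv:
  assumes sa: "self_adjoint S" and z: "Im z \<noteq> 0" and x: "x \<in> dom S"
  shows "resolvent S z (app S x - z *\<^sub>C x) = x"
  using sa_inj[OF sa z res_prop(1)[OF sa z] x res_prop(2)[OF sa z]] .

lemma res_add:
  assumes sa: "self_adjoint S" and z: "Im z \<noteq> 0"
  shows "resolvent S z (y1 + y2) = resolvent S z y1 + resolvent S z y2"
proof -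
  have lin: "linear_op S" using sa by (simp add: self_adjoint_def)
  let ?x1 = "resolvent S z y1" and ?x2 = "resolvent S z y2"
  have d: "?x1 \<in> dom S" "?x2 \<in> dom S" using res_prop[OF sa z] by auto
  have "app S (?x1 + ?x2) - z *\<^sub>C (?x1 + ?x2) = (app S ?x1 - z *\<^sub>C ?x1) + (app S ?x2 - z *\<^sub>C ?x2)"
    using lin_app(1)[OF lin d] by (simp add: scaleC_add_right algebra_simps)
  also have "\<dots> = y1 + y2" using res_prop(2)[OF sa z] by simp
  finally have "resolvent S z (y1 + y2) = resolvent S z (app S (?x1 + ?x2) - z *\<^sub>C (?x1 + ?x2))" by simp
  also have "\<dots> = ?x1 + ?x2" by (rule res_inv[OF sa z lin_dom(1)[OF lin d]])
  finally show ?thesis .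
qed

lemma res_scale:
  assumes sa: "self_adjoint S" and z: "Im z \<noteq> 0"
  shows "resolvent S z (c *\<^sub>C y) = c *\<^sub>C resolvent S z y"
proof -
  have lin: "linear_op S" using sa by (simp add: self_adjoint_def)
  let ?x = "resolvent S z y"
  have d: "?x \<in> dom S" using res_prop[OF sa z] by auto
  have "app S (c *\<^sub>C ?x) - z *\<^sub>C (c *\<^sub>C ?x) = c *\<^sub>C (app S ?x - z *\<^sub>C ?x)"
    using lin_app(2)[OF lin d d] by (simp add: scaleC_diff_right scaleC_scaleC mult.commute)
  also have "\<dots> = c *\<^sub>C y" using res_prop(2)[OF sa z] by simp
  finally have "resolvent S z (c *\<^sub>C y) = resolvent S z (app S (c *\<^sub>C ?x) - z *\<^sub>C (c *\<^sub>C ?x))" by simp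
  also have "\<dots> = c *\<^sub>C ?x" by (rule res_inv[OF sa z lin_dom(2)[OF lin d d]])
  finally show ?thesis .
qed

lemma res_bl:
  assumes sa: "self_adjoint S" and z: "Im z \<noteq> 0"
  shows "bounded_linear (resolvent S z)"
proof (rule bounded_linear_intro[where K="inverse \<bar>Im z\<bar>"])
  show "resolvent S z (x + y) = resolvent S z x + resolvent S z y" for x y by (rule res_add[OF sa z])
  show "resolvent S z (r *\<^sub>R x) = r *\<^sub>R resolvent S z x" for r x
    by (simp add: scaleR_scaleC res_scale[OF sa z])
  show "norm (resolvent S z x) \<le> norm x * inverse \<bar>Im z\<bar>" for x
  proof -
    have "\<bar>Im z\<bar> * norm (resolvent S z x) \<le> norm x"
      using sa_bound[OF sa res_prop(1)[OF sa z], of z x] res_prop(2)[OF sa z, of x] by simp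
    thus ?thesis using z by (simp add: field_simps)
  qed
qed

lemma res_adj:
  assumes sa: "self_adjoint S" and z: "Im z \<noteq> 0"
  shows "cinner (resolvent S z x) y = cinner x (resolvent S (cnj z) y)"
proof -
  have z': "Im (cnj z) \<noteq> 0" using z by simp
  let ?u = "resolvent S z x" and ?v = "resolvent S (cnj z) y"
  have u: "?u \<in> dom S" "app S ?u - z *\<^sub>C ?u = x" using res_prop[OF sa z] by auto
  have v: "?v \<in> dom S" "app S ?v - cnj z *\<^sub>C ?v = y" using res_prop[OF sa z'] by auto
  have "cinner x ?v = cinner (app S ?u) ?v - cnj z * cinner ?u ?v"
    by (subst u(2)[symmetric]) (simp add: cinner_diff_left cinner_scaleC_left)
  also have "\<dots> = cinner ?u (app S ?v) - cnj z * cinner ?u ?v" using sa_sym[OF sa u(1) v(1)] by simp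
  also have "\<dots> = cinner ?u y"
    by (subst v(2)[symmetric]) (simp add: cinner_diff_right cinner_scaleC_right)
  finally show ?thesis by simp
qed

lemma continuous_on_scaleC[continuous_intros]:
  "continuous_on s g \<Longrightarrow> continuous_on s (\<lambda>x. c *\<^sub>C (g x::'a::chilbert_space))"
  using continuous_on_compose2[OF linear_continuous_on[OF bl_scaleC, of UNIV c]] by fastforce

lemma ess_dense:
  assumes ess: "ess_self_adjoint T" and z: "Im z \<noteq> 0"
  shows "closure {app T f - z *\<^sub>C f | f. f \<in> dom T} = UNIV"
proof -
  obtain S where gS: "graph S = closure (graph T)" and sa: "self_adjoint S"
    using ess unfolding ess_self_adjoint_def by blast
  define D where "D = {app T f - z *\<^sub>C f | f. f \<in> dom T}"
  define g where "g = (\<lambda>p::'a \<times> 'a. snd p - z *\<^sub>C fst p)"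
  have cg: "continuous_on (closure (graph T)) g" unfolding g_def by (intro continuous_intros)
  have "g ` graph T \<subseteq> closure D" unfolding g_def graph_def D_def using closure_subset by fastforce
  hence sub: "g ` closure (graph T) \<subseteq> closure D" by (rule image_closure_subset[OF cg closed_closure])
  have "y \<in> closure D" for y
  proof -
    obtain x where x: "x \<in> dom S" "app S x - z *\<^sub>C x = y" using sa_surj[OF sa z] by blast
    have "(x, app S x) \<in> closure (graph T)" using x(1) gS[symmetric] by (auto simp: graph_def)
    hence "g (x, app S x) \<in> closure D" using sub by blast
    thus ?thesis using x(2) by (simp add: g_def)
  qed
  thus ?thesis unfolding D_def by blast
qed

lemma ext_dense:
  fixes F G :: "'a::chilbert_space \<Rightarrow> 'a"
  assumes D: "closure D = UNIV" and F: "bounded_linear F" and G: "bounded_linear G"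
    and eq: "\<And>y. y \<in> D \<Longrightarrow> F y = G y"
  shows "F x = G x"
proof -
  have "closed {x. F x = G x}"
    by (rule closed_Collect_eq[OF linear_continuous_on[OF F] linear_continuous_on[OF G]])
  moreover have "D \<subseteq> {x. F x = G x}" using eq by blast
  ultimately have "closure D \<subseteq> {x. F x = G x}" by (rule closure_minimal[rotated])
  thus ?thesis using D by blast
qed


lemma E1s:
  fixes Y P Q f :: "'a::chilbert_space"
  assumes h: "cnj r * r = 1"
  shows "cnj r *\<^sub>C ((r^2 *\<^sub>C Y - (b*r) *\<^sub>C P) - (a*r) *\<^sub>C (Q - (b*r) *\<^sub>C f))
       + ((cnj r - r) / 2 * a * b) *\<^sub>C f - (- ((cnj r - r) / 2 * a * b)) *\<^sub>C f
     = r *\<^sub>C ((Y - (a * cnj r) *\<^sub>C Q) - (b * cnj r) *\<^sub>C (P - (a * cnj r) *\<^sub>C f))"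
  by (rule E1g[where Y=Y and P=P and Q=Q and f=f, OF h]) (simp_all add: lc_def scaleC_one)

lemma E2g:
  fixes Y P Q f :: "'a::chilbert_space"
  assumes e: "Y' = lc Y P Q f 1 0 0 0" "P' = lc Y P Q f 0 1 0 0" "Q' = lc Y P Q f 0 0 1 0" "f' = lc Y P Q f 0 0 0 1"
  shows "q *\<^sub>C ((Y' - l *\<^sub>C Q') - m *\<^sub>C (P' - l *\<^sub>C f')) + (m*l*q*(q-1)) *\<^sub>C f'
     = (q *\<^sub>C Y' - (m*q) *\<^sub>C P') - (l*q) *\<^sub>C (Q' - (m*q) *\<^sub>C f')"
  unfolding e lc_rules by (rule lc_cong) (simp_all add: algebra_simps)

lemma E2s:
  fixes Y P Q f :: "'a::chilbert_space"
  shows "q *\<^sub>C ((Y - l *\<^sub>C Q) - m *\<^sub>C (P - l *\<^sub>C f)) + (m*l*q*(q-1)) *\<^sub>C f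
     = (q *\<^sub>C Y - (m*q) *\<^sub>C P) - (l*q) *\<^sub>C (Q - (m*q) *\<^sub>C f)"
  by (rule E2g[where Y=Y and P=P and Q=Q and f=f]) (simp_all add: lc_def scaleC_one)

lemma E3g:
  fixes Y P Q f :: "'a::chilbert_space"
  assumes h: "cnj r * r = 1" and e: "Y' = lc Y P Q f 1 0 0 0" "P' = lc Y P Q f 0 1 0 0" "Q' = lc Y P Q f 0 0 1 0" "f' = lc Y P Q f 0 0 0 1"
  shows "cnj r *\<^sub>C ((r^2 *\<^sub>C Y' - (b*r) *\<^sub>C P') - (a*r) *\<^sub>C (Q' - (b*r) *\<^sub>C f'))
       + ((cnj r - r) / 2 * a * b) *\<^sub>C f' - ((cnj r - r) / 2 * a * b) *\<^sub>C f'
     = cnj r *\<^sub>C ((r^2 *\<^sub>C Y' - ((b * cnj r)*r^2) *\<^sub>C P') - ((a * cnj r)*r^2) *\<^sub>C (Q' - ((b * cnj r)*r^2) *\<^sub>C f'))"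
proof -
  have r0: "r \<noteq> 0" using h by auto
  have cr: "cnj r = inverse r" using h r0 by (simp add: field_simps)
  show ?thesis unfolding e lc_rules
    by (rule lc_cong) (simp_all add: cr field_simps power2_eq_square)
qed

lemma E3s:
  fixes Y P Q f :: "'a::chilbert_space"
  assumes h: "cnj r * r = 1"
  shows "cnj r *\<^sub>C ((r^2 *\<^sub>C Y - (b*r) *\<^sub>C P) - (a*r) *\<^sub>C (Q - (b*r) *\<^sub>C f))
       + ((cnj r - r) / 2 * a * b) *\<^sub>C f - ((cnj r - r) / 2 * a * b) *\<^sub>C f
     = cnj r *\<^sub>C ((r^2 *\<^sub>C Y - ((b * cnj r)*r^2) *\<^sub>C P) - ((a * cnj r)*r^2) *\<^sub>C (Q - ((b * cnj r)*r^2) *\<^sub>C f))"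
  by (rule E3g[where Y=Y and P=P and Q=Q and f=f, OF h]) (simp_all add: lc_def scaleC_one)



theorem mainTheorem7:
  fixes A B :: "'a::chilbert_space lop" and q r :: complex and a b :: real
  assumes "cmod q = 1" and "q\<^sup>2 \<noteq> 1"
    and "self_adjoint A" and "self_adjoint B"
    and "a * b \<noteq> 0"
    and "r\<^sup>2 = q"
    and "ess_self_adjoint (Top A B q r a b)"
  shows "let l = of_real a * cnj r; m = of_real b * cnj r in
    l \<in> resolvent_set A \<and> l * q \<in> resolvent_set A \<and>
    m \<in> resolvent_set B \<and> m * q \<in> resolvent_set B \<and>
    (\<forall>x. resolvent A l (resolvent B m x) =
        q *\<^sub>C resolvent B (m * q) (resolvent A (l * q) x)
        + (m * l * q * (q - 1)) *\<^sub>C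
            resolvent B (m * q) (resolvent A (l * q) (resolvent A l (resolvent B m x)))) \<and>
    (\<forall>x. resolvent A l (resolvent B m x) =
        q *\<^sub>C resolvent B (m * q) (resolvent A (l * q) x)
        + (m * l * q * (q - 1)) *\<^sub>C
            resolvent A l (resolvent B m (resolvent B (m * q) (resolvent A (l * q) x)))) \<and>
    normal_op (\<lambda>x. resolvent B (of_real b * r) (resolvent A (of_real a * r) x))"
proof -
  note q1 = assms(1) and q2 = assms(2) and saA = assms(3) and saB = assms(4)
    and ab = assms(5) and rq = assms(6) and ess = assms(7)
  have linA: "linear_op A" using saA by (simp add: self_adjoint_def)
  have linB: "linear_op B" using saB by (simp add: self_adjoint_def)
  define ca where "ca = complex_of_real a"
  define cb where "cb = complex_of_real b"
  define l where "l = ca * cnj r"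
  define m where "m = cb * cnj r"
  define k where "k = (cnj r - r) / 2 * ca * cb"
  define c where "c = m * l * q * (q - 1)"
  have a0: "a \<noteq> 0" and b0: "b \<noteq> 0" using ab by auto
  have cmr: "cmod r = 1"
  proof -
    have "(cmod r)^2 = 1" using q1 rq by (simp add: norm_power[symmetric])
    thus ?thesis using norm_ge_zero[of r] by (auto simp: power2_eq_1_iff)
  qed
  have h: "cnj r * r = 1"
    using complex_norm_square[of r] cmr by (simp add: mult.commute)
  have r0: "r \<noteq> 0" using h by auto
  have q0: "q \<noteq> 0" using rq r0 by auto
  have qn1: "q \<noteq> 1" using q2 by auto
  have Imr: "Im r \<noteq> 0"
  proof
    assume "Im r = 0"
    hence "cnj r = r" by (simp add: complex_eq_iff)
    hence "q = 1" using h rq by (simp add: power2_eq_square)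
    thus False using qn1 by simp
  qed
  have "l * q = ca * (cnj r * r) * r" by (simp add: l_def rq[symmetric] power2_eq_square mult_ac)
  hence lq: "l * q = ca * r" using h by simp
  have "m * q = cb * (cnj r * r) * r" by (simp add: m_def rq[symmetric] power2_eq_square mult_ac)
  hence mq: "m * q = cb * r" using h by simp
  have Iml: "Im l \<noteq> 0" using Imr a0 by (simp add: l_def ca_def)
  have Imlq: "Im (l * q) \<noteq> 0" using Imr a0 by (simp add: lq ca_def)
  have Imm: "Im m \<noteq> 0" using Imr b0 by (simp add: m_def cb_def)
  have Immq: "Im (m * q) \<noteq> 0" using Imr b0 by (simp add: mq cb_def)
  have Imk: "Im k \<noteq> 0" using Imr a0 b0 by (simp add: k_def ca_def cb_def)
  have Imk': "Im (- k) \<noteq> 0" using Imk by simp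
  have c0: "c \<noteq> 0" using a0 b0 r0 q0 qn1 by (simp add: c_def l_def m_def ca_def cb_def)
  define RA where "RA = resolvent A l"
  define RA' where "RA' = resolvent A (l * q)"
  define RB where "RB = resolvent B m"
  define RB' where "RB' = resolvent B (m * q)"
  define R where "R = (\<lambda>x. RA (RB x))"
  define R' where "R' = (\<lambda>x. RB' (RA' x))"
  have blR: "bounded_linear R" unfolding R_def RA_def RB_def
    by (rule bounded_linear_compose[OF res_bl[OF saA Iml] res_bl[OF saB Imm]])
  have blR': "bounded_linear R'" unfolding R'_def RA'_def RB'_def
    by (rule bounded_linear_compose[OF res_bl[OF saB Immq] res_bl[OF saA Imlq]])
  have R_add: "R (x + y) = R x + R y" and R_sc: "R (e *\<^sub>C x) = e *\<^sub>C R x" for x y e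
    unfolding R_def RA_def RB_def
    by (simp_all add: res_add[OF saA Iml] res_add[OF saB Imm] res_scale[OF saA Iml] res_scale[OF saB Imm])
  have R'_add: "R' (x + y) = R' x + R' y" and R'_sc: "R' (e *\<^sub>C x) = e *\<^sub>C R' x" for x y e
    unfolding R'_def RA'_def RB'_def
    by (simp_all add: res_add[OF saA Imlq] res_add[OF saB Immq] res_scale[OF saA Imlq] res_scale[OF saB Immq])
  have Dq: "f \<in> dom A" "app A f \<in> dom B" "f \<in> dom B" "app B f \<in> dom A"
     "app A (app B f) = q *\<^sub>C app B (app A f)" if "f \<in> Dq A B q" for f
    using that by (auto simp: Dq_def lop_comp_def dom_def app_def)
  have domT: "dom (Top A B q r a b) = Dq A B q" by (simp add: Top_def dom_def)
  have appT: "app (Top A B q r a b) f = cnj r *\<^sub>C ((r^2 *\<^sub>C app B (app A f) - (cb*r) *\<^sub>C app A f) - (ca*r) *\<^sub>C (app B f - (cb*r) *\<^sub>C f)) + k *\<^sub>C f"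
    if f: "f \<in> Dq A B q" for f
  proof -
    note d = Dq[OF f]
    have "app A (app B f - (cb*r) *\<^sub>C f) = app A (app B f) - (cb*r) *\<^sub>C app A f"
      using lin_app(3)[OF linA d(4) lin_dom(2)[OF linA d(1) d(1)]] lin_app(2)[OF linA d(1) d(1)] by simp
    thus ?thesis using d(5) rq
      by (simp add: Top_def app_def lop_comp_def lop_shift_def k_def ca_def cb_def)
  qed
  have key1: "app (Top A B q r a b) f - (- k) *\<^sub>C f = r *\<^sub>C (app B (app A f - l *\<^sub>C f) - m *\<^sub>C (app A f - l *\<^sub>C f))
       \<and> R (app B (app A f - l *\<^sub>C f) - m *\<^sub>C (app A f - l *\<^sub>C f)) = f
       \<and> q *\<^sub>C (app B (app A f - l *\<^sub>C f) - m *\<^sub>C (app A f - l *\<^sub>C f)) + c *\<^sub>C f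
          = app A (app B f - (m*q) *\<^sub>C f) - (l*q) *\<^sub>C (app B f - (m*q) *\<^sub>C f)
       \<and> R' (app A (app B f - (m*q) *\<^sub>C f) - (l*q) *\<^sub>C (app B f - (m*q) *\<^sub>C f)) = f
       \<and> app (Top A B q r a b) f - k *\<^sub>C f = cnj r *\<^sub>C (app A (app B f - (m*q) *\<^sub>C f) - (l*q) *\<^sub>C (app B f - (m*q) *\<^sub>C f))"
    if f: "f \<in> Dq A B q" for f
  proof -
    note d = Dq[OF f]
    let ?P = "app A f" and ?Q = "app B f" and ?Y = "app B (app A f)"
    have u1: "?P - l *\<^sub>C f \<in> dom B" using lin_dom(3)[OF linB d(2) lin_dom(2)[OF linB d(3) d(3)]] .
    have u2: "?Q - (m*q) *\<^sub>C f \<in> dom A" using lin_dom(3)[OF linA d(4) lin_dom(2)[OF linA d(1) d(1)]] .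
    have Bv: "app B (?P - l *\<^sub>C f) = ?Y - l *\<^sub>C ?Q"
      using lin_app(3)[OF linB d(2) lin_dom(2)[OF linB d(3) d(3)]] lin_app(2)[OF linB d(3) d(3)] by simp
    have Aw: "app A (?Q - (m*q) *\<^sub>C f) = q *\<^sub>C ?Y - (m*q) *\<^sub>C ?P"
      using lin_app(3)[OF linA d(4) lin_dom(2)[OF linA d(1) d(1)]] lin_app(2)[OF linA d(1) d(1)] d(5) by simp
    have "app (Top A B q r a b) f - (- k) *\<^sub>C f = r *\<^sub>C (app B (?P - l *\<^sub>C f) - m *\<^sub>C (?P - l *\<^sub>C f))"
      unfolding Bv appT[OF f] unfolding k_def l_def m_def by (rule E1s[OF h])
    moreover have "R (app B (?P - l *\<^sub>C f) - m *\<^sub>C (?P - l *\<^sub>C f)) = f"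
      unfolding R_def RB_def RA_def
      by (simp add: res_inv[OF saB Imm u1] res_inv[OF saA Iml d(1)])
    moreover have "q *\<^sub>C (app B (?P - l *\<^sub>C f) - m *\<^sub>C (?P - l *\<^sub>C f)) + c *\<^sub>C f
          = app A (?Q - (m*q) *\<^sub>C f) - (l*q) *\<^sub>C (?Q - (m*q) *\<^sub>C f)"
      unfolding Bv Aw c_def by (rule E2s)
    moreover have "R' (app A (?Q - (m*q) *\<^sub>C f) - (l*q) *\<^sub>C (?Q - (m*q) *\<^sub>C f)) = f"
      unfolding R'_def RB'_def RA'_def
      by (simp add: res_inv[OF saA Imlq u2] res_inv[OF saB Immq d(3)])
    moreover have "app (Top A B q r a b) f - k *\<^sub>C f = cnj r *\<^sub>C (app A (?Q - (m*q) *\<^sub>C f) - (l*q) *\<^sub>C (?Q - (m*q) *\<^sub>C f))"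
      unfolding appT[OF f] Aw unfolding k_def l_def m_def rq[symmetric] by (rule E3s[OF h])
    ultimately show ?thesis by blast
  qed
  have dense1: "closure {app (Top A B q r a b) f - (- k) *\<^sub>C f | f. f \<in> dom (Top A B q r a b)} = UNIV"
    by (rule ess_dense[OF ess Imk'])
  have dense2: "closure {app (Top A B q r a b) f - k *\<^sub>C f | f. f \<in> dom (Top A B q r a b)} = UNIV"
    by (rule ess_dense[OF ess Imk])
  have id1: "R x = q *\<^sub>C R' x + c *\<^sub>C R' (R x)" for x
  proof (rule ext_dense[OF dense1 blR])
    show "bounded_linear (\<lambda>x. q *\<^sub>C R' x + c *\<^sub>C R' (R x))"
      by (intro bounded_linear_add bounded_linear_compose[OF bl_scaleC] bounded_linear_compose[OF blR'] blR blR')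
    fix y assume "y \<in> {app (Top A B q r a b) f - (- k) *\<^sub>C f | f. f \<in> dom (Top A B q r a b)}"
    then obtain f where f: "f \<in> Dq A B q" and y: "y = app (Top A B q r a b) f - (- k) *\<^sub>C f"
      using domT by auto
    define v where "v = app B (app A f - l *\<^sub>C f) - m *\<^sub>C (app A f - l *\<^sub>C f)"
    define w where "w = app A (app B f - (m*q) *\<^sub>C f) - (l*q) *\<^sub>C (app B f - (m*q) *\<^sub>C f)"
    have k1: "y = r *\<^sub>C v" "R v = f" "q *\<^sub>C v + c *\<^sub>C f = w" "R' w = f"
      using key1[OF f] y unfolding v_def w_def by auto
    have "R y = r *\<^sub>C f" using k1 by (simp add: R_sc)
    also have "\<dots> = r *\<^sub>C R' (q *\<^sub>C v + c *\<^sub>C f)" using k1 by simp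
    also have "\<dots> = q *\<^sub>C R' y + c *\<^sub>C R' (R y)"
      unfolding k1(1) R_sc k1(2) R'_add R'_sc by (simp add: scaleC_add_right scaleC_scaleC mult.commute)
    finally show "R y = q *\<^sub>C R' y + c *\<^sub>C R' (R y)" .
  qed
  have id2: "R x = q *\<^sub>C R' x + c *\<^sub>C R (R' x)" for x
  proof (rule ext_dense[OF dense2 blR])
    show "bounded_linear (\<lambda>x. q *\<^sub>C R' x + c *\<^sub>C R (R' x))"
      by (intro bounded_linear_add bounded_linear_compose[OF bl_scaleC] bounded_linear_compose[OF blR] blR blR')
    fix y assume "y \<in> {app (Top A B q r a b) f - k *\<^sub>C f | f. f \<in> dom (Top A B q r a b)}"
    then obtain f where f: "f \<in> Dq A B q" and y: "y = app (Top A B q r a b) f - k *\<^sub>C f"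
      using domT by auto
    define v where "v = app B (app A f - l *\<^sub>C f) - m *\<^sub>C (app A f - l *\<^sub>C f)"
    define w where "w = app A (app B f - (m*q) *\<^sub>C f) - (l*q) *\<^sub>C (app B f - (m*q) *\<^sub>C f)"
    have k1: "y = cnj r *\<^sub>C w" "R v = f" "q *\<^sub>C v + c *\<^sub>C f = w" "R' w = f"
      using key1[OF f] y unfolding v_def w_def by auto
    have "R y = cnj r *\<^sub>C R (q *\<^sub>C v + c *\<^sub>C f)" unfolding k1(1) k1(3) R_sc ..
    also have "\<dots> = q *\<^sub>C R' y + c *\<^sub>C R (R' y)"
      unfolding k1(1) R'_sc k1(4) R_add R_sc k1(2) by (simp add: scaleC_add_right scaleC_scaleC mult.commute)
    finally show "R y = q *\<^sub>C R' y + c *\<^sub>C R (R' y)" .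
  qed
  have RB'eq: "resolvent B (of_real b * r) = RB'" unfolding RB'_def mq cb_def ..
  have RA'eq: "resolvent A (of_real a * r) = RA'" unfolding RA'_def lq ca_def ..
  have adj: "cinner (R' x) y = cinner x (R y)" for x y
  proof -
    have cm: "cnj (m * q) = m" unfolding mq unfolding m_def cb_def by simp
    have cl: "cnj (l * q) = l" unfolding lq unfolding l_def ca_def by simp
    show ?thesis unfolding R'_def R_def RB'_def RA'_def RA_def RB_def
      using res_adj[OF saB Immq] res_adj[OF saA Imlq] cm cl by simp
  qed
  have badj: "badjoint R' = R"
  proof
    fix y
    show "badjoint R' y = R y" unfolding badjoint_def
    proof (rule the_equality)
      show "\<forall>x. cinner (R' x) y = cinner x (R y)" using adj by blast
      fix z assume z: "\<forall>x. cinner (R' x) y = cinner x z"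
      have "cinner (z - R y) (z - R y) = 0"
        using z adj[of "z - R y" y] by (simp add: cinner_diff_right)
      thus "z = R y" by (simp add: cinner_self_eq_0)
    qed
  qed
  have comm: "R' (R x) = R (R' x)" for x
  proof -
    have "c *\<^sub>C R' (R x) = c *\<^sub>C R (R' x)" using id1[of x] id2[of x] by simp
    hence "inverse c *\<^sub>C (c *\<^sub>C R' (R x)) = inverse c *\<^sub>C (c *\<^sub>C R (R' x))" by simp
    thus ?thesis using c0 by (simp add: scaleC_scaleC scaleC_one)
  qed
  have normal: "normal_op (\<lambda>x. resolvent B (of_real b * r) (resolvent A (of_real a * r) x))"
  proof -
    have e: "(\<lambda>x. resolvent B (of_real b * r) (resolvent A (of_real a * r) x)) = R'"
      unfolding RB'eq RA'eq R'_def ..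
    show ?thesis unfolding e normal_op_def badj using comm by (auto simp: fun_eq_iff)
  qed
  have main: "l \<in> resolvent_set A \<and> l * q \<in> resolvent_set A \<and>
    m \<in> resolvent_set B \<and> m * q \<in> resolvent_set B \<and>
    (\<forall>x. RA (RB x) = q *\<^sub>C RB' (RA' x) + (m * l * q * (q - 1)) *\<^sub>C RB' (RA' (RA (RB x)))) \<and>
    (\<forall>x. RA (RB x) = q *\<^sub>C RB' (RA' x) + (m * l * q * (q - 1)) *\<^sub>C RA (RB (RB' (RA' x))))"
    using res_set[OF saA Iml] res_set[OF saA Imlq] res_set[OF saB Imm] res_set[OF saB Immq]
      id1 id2 unfolding R_def R'_def c_def by blast
  show ?thesis unfolding Let_def ca_def[symmetric] cb_def[symmetric] l_def[symmetric] m_def[symmetric]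
      RA_def[symmetric] RB_def[symmetric] RA'_def[symmetric] RB'_def[symmetric]
    using main normal[unfolded ca_def[symmetric] cb_def[symmetric]] by blast
qed


end
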